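(* For every probabilistic single-item auction (with $n$ bidders and $m$ types), there exists a mixed signaling scheme maximizing the expected revenue among all mixed signaling schemes that uses at most $m+\min\{\binom{n}{2},\binom{m}{2}\}$ signals.
   Context: A probabilistic single-item auction consists of $n\ge 2$ bidders, $m$ item types, a probability distribution $(p_1,\dots,p_m)$ over types, and nonnegative valuations $v_{i,j}$ (value of bidder $i$ for an item of type $j$). The auctioneer observes the realized type and broadcasts a signal; bidders then participate in a second-price auction, each bidding their expected valuation conditional on the signal. A mixed signaling scheme is a finite set $\mathcal{S}$ of signals and a map $\varphi:[m]\times\mathcal{S}\to[0,1]$ with $\sum_{S\in\mathcal{S}}\varphi(j,S)=1$ for every type $j$. Writing $\psi_{i,j}=p_jv_{i,j}$ and $\mathrm{max2}$ for the second-largest entry of a list (with multiplicity), the expected revenue of $\varphi$ is $\sum_{S\in\mathcal{S}}\mathrm{max2}_i\big\{\sum_j \psi_{i,j}\varphi(j,S)\big\}$. *)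

theory Defs
  imports Complex_Main
begin

text \<open>Bidders are indexed by 0..<n, item types by 0..<m, signals by natural numbers
  (any finite signal set is in bijection with a finite set of naturals).\<close>

definition max2 :: "real list \<Rightarrow> real" where
  "max2 xs = rev (sort xs) ! 1"

text \<open>A mixed signaling scheme: a finite signal set S and phi j s = probability of
  sending signal s when the realized type is j.\<close>
definition is_mixed_scheme :: "nat \<Rightarrow> nat set \<Rightarrow> (nat \<Rightarrow> nat \<Rightarrow> real) \<Rightarrow> bool" where
  "is_mixed_scheme m S \<phi> \<longleftrightarrow> finite S \<and>
     (\<forall>j<m. \<forall>s\<in>S. 0 \<le> \<phi> j s \<and> \<phi> j s \<le> 1) \<and>
     (\<forall>j<m. (\<Sum>s\<in>S. \<phi> j s) = 1)"

definition revenue :: "nat \<Rightarrow> nat \<Rightarrow> (nat \<Rightarrow> real) \<Rightarrow> (nat \<Rightarrow> nat \<Rightarrow> real)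
    \<Rightarrow> nat set \<Rightarrow> (nat \<Rightarrow> nat \<Rightarrow> real) \<Rightarrow> real" where
  "revenue n m p v S \<phi> =
     (\<Sum>s\<in>S. max2 (map (\<lambda>i. \<Sum>j<m. (p j * v i j) * \<phi> j s) [0..<n]))"

end

theory Submission
  imports Defs "HOL-Analysis.Analysis"
begin


lemma max2_cone:
  fixes y :: "nat \<Rightarrow> real"
  assumes n2: "n \<ge> 2" and an: "a < n" and kn: "k < n" and ak: "a \<noteq> k"
    and yka: "y k \<le> y a" and oth: "\<forall>b<n. b \<noteq> a \<longrightarrow> y b \<le> y k"
  shows "max2 (map y [0..<n]) = y k"
proof -
  define xs where "xs = map y [0..<n]"
  define zs where "zs = sort xs"
  have lz: "length zs = n" by (simp add: zs_def xs_def)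
  have sz: "sorted zs" by (simp add: zs_def)
  have cnt: "\<And>P. card {i. i < n \<and> P (zs ! i)} = card {i. i < n \<and> P (y i)}"
  proof -
    fix P :: "real \<Rightarrow> bool"
    have "length (filter P zs) = length (filter P xs)"
      by (metis zs_def mset_sort mset_filter size_mset)
    moreover have "{i. i < n \<and> P (map y [0..<n] ! i)} = {i. i < n \<and> P (y i)}" by auto
    ultimately show "card {i. i < n \<and> P (zs ! i)} = card {i. i < n \<and> P (y i)}"
      by (simp add: length_filter_conv_card lz xs_def)
  qed
  have m2: "max2 xs = zs ! (n - 2)"
    unfolding max2_def zs_def[symmetric] using n2 lz by (simp add: rev_nth) (simp add: numeral_2_eq_2)
  define t where "t = y k"
  have A: "card {i. i < n \<and> t \<le> y i} \<ge> 2"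
  proof -
    have "{a, k} \<subseteq> {i. i < n \<and> t \<le> y i}" using an kn yka by (auto simp: t_def)
    hence "card {a,k} \<le> card {i. i < n \<and> t \<le> y i}" by (rule card_mono[rotated]) auto
    thus ?thesis using ak by simp
  qed
  have B: "card {i. i < n \<and> t < y i} \<le> 1"
  proof -
    have "{i. i < n \<and> t < y i} \<subseteq> {a}" using oth by (force simp: t_def)
    hence "card {i. i < n \<and> t < y i} \<le> card {a}" by (intro card_mono) auto
    thus ?thesis by simp
  qed
  have "\<not> zs ! (n-2) < t"
  proof
    assume h: "zs ! (n-2) < t"
    have "{i. i < n \<and> t \<le> zs ! i} \<subseteq> {n - 1}"
    proof
      fix i assume "i \<in> {i. i < n \<and> t \<le> zs ! i}"
      hence i: "i < n" "t \<le> zs ! i" by auto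
      { assume "i \<le> n - 2"
        hence "zs ! i \<le> zs ! (n-2)" using sz lz n2 by (intro sorted_nth_mono) auto
        hence False using h i by auto }
      thus "i \<in> {n-1}" using i by fastforce
    qed
    hence "card {i. i < n \<and> t \<le> zs ! i} \<le> card {n-1}" by (intro card_mono) auto
    hence "card {i. i < n \<and> t \<le> zs ! i} \<le> 1" by simp
    thus False using A cnt[of "\<lambda>x. t \<le> x"] by simp
  qed
  moreover have "\<not> zs ! (n-2) > t"
  proof
    assume h: "zs ! (n-2) > t"
    have h2: "zs ! (n-1) \<ge> zs ! (n-2)" using sz lz n2 by (intro sorted_nth_mono) auto
    have "{n-2, n-1} \<subseteq> {i. i < n \<and> t < zs ! i}" using h h2 n2 by auto
    hence "card {n-2, n-1} \<le> card {i. i < n \<and> t < zs ! i}" by (rule card_mono[rotated]) auto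
    moreover have "card {n-2, n-1::nat} = 2" using n2 by simp
    ultimately show False using B cnt[of "\<lambda>x. t < x"] by simp
  qed
  ultimately show ?thesis using m2 by (simp add: xs_def t_def)
qed



definition gl :: "nat \<Rightarrow> (nat \<Rightarrow> nat \<Rightarrow> real) \<Rightarrow> nat \<Rightarrow> (nat \<Rightarrow> real) \<Rightarrow> real" where
  "gl m w i x = (\<Sum>j<m. w i j * x j)"
definition fv :: "nat \<Rightarrow> nat \<Rightarrow> (nat \<Rightarrow> nat \<Rightarrow> real) \<Rightarrow> (nat \<Rightarrow> real) \<Rightarrow> real" where
  "fv n m w x = max2 (map (\<lambda>i. gl m w i x) [0..<n])"
definition incone :: "nat \<Rightarrow> nat \<Rightarrow> (nat \<Rightarrow> nat \<Rightarrow> real) \<Rightarrow> nat \<times> nat \<Rightarrow> (nat \<Rightarrow> real) \<Rightarrow> bool" where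
  "incone n m w c x \<longleftrightarrow> gl m w (snd c) x \<le> gl m w (fst c) x \<and>
     (\<forall>b<n. b \<noteq> fst c \<longrightarrow> gl m w b x \<le> gl m w (snd c) x)"
definition cones :: "nat \<Rightarrow> (nat \<times> nat) set" where
  "cones n = {(a,k). a < n \<and> k < n \<and> a \<noteq> k}"

lemma finite_cones: "finite (cones n)"
proof -
  have "cones n \<subseteq> {..<n} \<times> {..<n}" by (auto simp: cones_def)
  thus ?thesis by (rule finite_subset) auto
qed

lemma gl_cong: "(\<And>j. j < m \<Longrightarrow> x j = y j) \<Longrightarrow> gl m w i x = gl m w i y"
  unfolding gl_def by (intro sum.cong) auto

lemma gl_scale: "gl m w i (\<lambda>j. c * x j) = c * gl m w i x"
  unfolding gl_def by (simp add: sum_distrib_left algebra_simps)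

lemma gl_sum: "gl m w i (\<lambda>j. \<Sum>s\<in>T. x s j) = (\<Sum>s\<in>T. gl m w i (x s))"
  unfolding gl_def by (simp add: sum_distrib_left sum.swap[of _ T])

lemma gl_zero: "gl m w i (\<lambda>_. 0) = 0"
  unfolding gl_def by simp

lemma incone_cong: "(\<And>j. j < m \<Longrightarrow> x j = y j) \<Longrightarrow> incone n m w c x = incone n m w c y"
  unfolding incone_def using gl_cong[of m x y w] by simp

lemma incone_scale: "0 \<le> t \<Longrightarrow> incone n m w c x \<Longrightarrow> incone n m w c (\<lambda>j. t * x j)"
  unfolding incone_def gl_scale by (auto intro: mult_left_mono)

lemma incone_sum: "(\<And>s. s \<in> T \<Longrightarrow> incone n m w c (x s)) \<Longrightarrow> incone n m w c (\<lambda>j. \<Sum>s\<in>T. x s j)"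
  unfolding incone_def gl_sum by (auto intro: sum_mono)

lemma incone_zero: "incone n m w c (\<lambda>_. 0)"
  unfolding incone_def gl_zero by simp

lemma fv_cone: "n \<ge> 2 \<Longrightarrow> c \<in> cones n \<Longrightarrow> incone n m w c x \<Longrightarrow> fv n m w x = gl m w (snd c) x"
  unfolding fv_def incone_def cones_def
  by (cases c) (auto intro!: max2_cone[where a="fst c"])

lemma cone_exists:
  assumes n2: "n \<ge> 2" shows "\<exists>c\<in>cones n. incone n m w c x"
proof -
  let ?g = "\<lambda>i. gl m w i x"
  define M where "M = Max (?g ` {..<n})"
  have "0 \<in> {..<n}" using n2 by simp
  hence "M \<in> ?g ` {..<n}" unfolding M_def by (intro Max_in) auto
  then obtain a where a: "a < n" "?g a = M" by auto
  have aM: "?g i \<le> ?g a" if "i < n" for i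
  proof -
    have "?g i \<le> M" unfolding M_def using that by (intro Max_ge) auto
    thus ?thesis using a by simp
  qed
  define M2 where "M2 = Max (?g ` {i. i < n \<and> i \<noteq> a})"
  have ne: "{i. i < n \<and> i \<noteq> a} \<noteq> {}"
  proof (cases "a = 0")
    case True thus ?thesis using n2 by (intro ex_in_conv[THEN iffD1]) (rule exI[of _ 1], auto)
  next
    case False thus ?thesis using a by (intro ex_in_conv[THEN iffD1]) (rule exI[of _ 0], auto)
  qed
  have "M2 \<in> ?g ` {i. i < n \<and> i \<noteq> a}" unfolding M2_def using ne by (intro Max_in) auto
  then obtain k where k: "k < n" "k \<noteq> a" "?g k = M2" by auto
  have kM: "?g i \<le> ?g k" if "i < n" "i \<noteq> a" for i
  proof -
    have "?g i \<le> M2" unfolding M2_def using that by (intro Max_ge) auto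
    thus ?thesis using k by simp
  qed
  show ?thesis
    by (rule bexI[of _ "(a,k)"]) (use a k aM kM in \<open>auto simp: incone_def cones_def\<close>)
qed

lemma fv_scale: "n \<ge> 2 \<Longrightarrow> 0 \<le> t \<Longrightarrow> fv n m w (\<lambda>j. t * x j) = t * fv n m w x"
proof -
  assume n2: "n \<ge> 2" and t: "0 \<le> t"
  obtain c where c: "c \<in> cones n" "incone n m w c x" using cone_exists[OF n2] by blast
  have "fv n m w (\<lambda>j. t * x j) = gl m w (snd c) (\<lambda>j. t * x j)"
    by (rule fv_cone[OF n2 c(1) incone_scale[OF t c(2)]])
  also have "\<dots> = t * fv n m w x" using fv_cone[OF n2 c] gl_scale by simp
  finally show ?thesis .
qed

lemma fv_cong: "(\<And>j. j < m \<Longrightarrow> x j = y j) \<Longrightarrow> fv n m w x = fv n m w y"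
  unfolding fv_def using gl_cong[of m x y w] by simp

lemma fv_zero: "n \<ge> 2 \<Longrightarrow> fv n m w (\<lambda>_. 0) = 0"
  using fv_scale[of n 0 m w "\<lambda>_. 0"] by simp

lemma gauss:
  fixes q :: "nat \<Rightarrow> nat \<Rightarrow> real"
  shows "finite S \<Longrightarrow> card S > m \<Longrightarrow> \<exists>\<mu>. (\<exists>s\<in>S. \<mu> s \<noteq> 0) \<and> (\<forall>j<m. (\<Sum>s\<in>S. \<mu> s * q j s) = 0)"
proof (induction m arbitrary: S q)
  case 0
  then obtain s where "s \<in> S" by fastforce
  thus ?case by (intro exI[of _ "\<lambda>_. 1"]) auto
next
  case (Suc m)
  show ?case
  proof (cases "\<forall>s\<in>S. q m s = 0")
    case True
    from Suc.IH[of S q] Suc.prems obtain \<mu> where \<mu>: "\<exists>s\<in>S. \<mu> s \<noteq> 0" "\<forall>j<m. (\<Sum>s\<in>S. \<mu> s * q j s) = 0" by auto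
    have "\<forall>j<Suc m. (\<Sum>s\<in>S. \<mu> s * q j s) = 0"
    proof (intro allI impI)
      fix j assume "j < Suc m"
      thus "(\<Sum>s\<in>S. \<mu> s * q j s) = 0" using \<mu>(2) True by (cases "j = m") auto
    qed
    thus ?thesis using \<mu>(1) by blast
  next
    case False
    then obtain s0 where s0: "s0 \<in> S" "q m s0 \<noteq> 0" by auto
    define S0 where "S0 = S - {s0}"
    define r where "r = (\<lambda>j s. q j s - (q m s / q m s0) * q j s0)"
    have fS0: "finite S0" using Suc.prems by (simp add: S0_def)
    have cS0: "card S0 > m" using Suc.prems s0 by (simp add: S0_def)
    from Suc.IH[OF fS0 cS0, of r] obtain \<mu>' where
      \<mu>': "\<exists>s\<in>S0. \<mu>' s \<noteq> 0" "\<forall>j<m. (\<Sum>s\<in>S0. \<mu>' s * r j s) = 0" by auto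
    define \<mu> where "\<mu> = (\<lambda>s. if s = s0 then - (\<Sum>s\<in>S0. \<mu>' s * q m s) / q m s0 else \<mu>' s)"
    have key: "(\<Sum>s\<in>S. \<mu> s * q j s) = (\<Sum>s\<in>S0. \<mu>' s * r j s)" for j
    proof -
      have k1: "(\<Sum>s\<in>S. \<mu> s * q j s) = \<mu> s0 * q j s0 + (\<Sum>s\<in>S0. \<mu> s * q j s)"
        using s0 Suc.prems(1) unfolding S0_def by (simp add: sum.remove)
      have k2: "(\<Sum>s\<in>S0. \<mu> s * q j s) = (\<Sum>s\<in>S0. \<mu>' s * q j s)"
        by (intro sum.cong) (auto simp: \<mu>_def S0_def)
      have "(\<Sum>s\<in>S0. \<mu>' s * r j s) = (\<Sum>s\<in>S0. \<mu>' s * q j s - (\<mu>' s * q m s) * (q j s0 / q m s0))"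
        unfolding r_def by (intro sum.cong) (auto simp: algebra_simps)
      also have "\<dots> = (\<Sum>s\<in>S0. \<mu>' s * q j s) - (\<Sum>s\<in>S0. \<mu>' s * q m s) * (q j s0 / q m s0)"
        by (simp only: sum_subtractf sum_distrib_right)
      finally show ?thesis using k1 k2 by (simp add: \<mu>_def algebra_simps)
    qed
    have "\<forall>j<Suc m. (\<Sum>s\<in>S. \<mu> s * q j s) = 0"
    proof (intro allI impI)
      fix j assume j: "j < Suc m"
      show "(\<Sum>s\<in>S. \<mu> s * q j s) = 0"
      proof (cases "j = m")
        case True
        have "r m s = 0" for s using s0 by (simp add: r_def)
        thus ?thesis using key True by simp
      next
        case False thus ?thesis using key \<mu>'(2) j by simp
      qed
    qed
    moreover have "\<exists>s\<in>S. \<mu> s \<noteq> 0" using \<mu>'(1) by (auto simp: \<mu>_def S0_def)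
    ultimately show ?thesis by blast
  qed
qed



lemma scheme_intro:
  assumes "finite S" "\<And>j s. j < m \<Longrightarrow> s \<in> S \<Longrightarrow> 0 \<le> \<phi> j s" "\<And>j. j < m \<Longrightarrow> (\<Sum>s\<in>S. \<phi> j s) = 1"
  shows "is_mixed_scheme m S \<phi>"
proof -
  have "\<phi> j s \<le> 1" if "j < m" "s \<in> S" for j s
  proof -
    have "\<phi> j s \<le> (\<Sum>s\<in>S. \<phi> j s)" using assms that by (intro member_le_sum) auto
    thus ?thesis using assms that by simp
  qed
  thus ?thesis using assms unfolding is_mixed_scheme_def by auto
qed

lemma reduce:
  assumes n2: "n \<ge> 2"
  shows "is_mixed_scheme m S \<phi> \<Longrightarrow> \<exists>S' \<phi>'. is_mixed_scheme m S' \<phi>' \<and> card S' \<le> m \<and>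
     (\<Sum>s\<in>S. fv n m w (\<lambda>j. \<phi> j s)) \<le> (\<Sum>s\<in>S'. fv n m w (\<lambda>j. \<phi>' j s))"
proof (induction "card S" arbitrary: S \<phi> rule: less_induct)
  case less
  have fS: "finite S" and nn: "\<And>j s. j < m \<Longrightarrow> s \<in> S \<Longrightarrow> 0 \<le> \<phi> j s"
    and sum1: "\<And>j. j < m \<Longrightarrow> (\<Sum>s\<in>S. \<phi> j s) = 1"
    using less.prems unfolding is_mixed_scheme_def by auto
  show ?case
  proof (cases "card S \<le> m")
    case True thus ?thesis using less.prems by blast
  next
    case cS: False
    show ?thesis
    proof (cases "\<exists>s0\<in>S. \<forall>j<m. \<phi> j s0 = 0")
      case True
      then obtain s0 where s0: "s0 \<in> S" "\<forall>j<m. \<phi> j s0 = 0" by blast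
      define S1 where "S1 = S - {s0}"
      have sp: "(\<Sum>s\<in>S. g s) = g s0 + (\<Sum>s\<in>S1. g s)" for g :: "nat \<Rightarrow> real"
        using fS s0 unfolding S1_def by (simp add: sum.remove)
      have sch: "is_mixed_scheme m S1 \<phi>"
        by (rule scheme_intro) (use fS nn sum1 sp s0 in \<open>auto simp: S1_def\<close>)
      have lt: "card S1 < card S" using card_Diff1_less[OF fS s0(1)] unfolding S1_def .
      have "fv n m w (\<lambda>j. \<phi> j s0) = fv n m w (\<lambda>_. 0)" using s0 by (intro fv_cong) auto
      hence eq: "(\<Sum>s\<in>S. fv n m w (\<lambda>j. \<phi> j s)) = (\<Sum>s\<in>S1. fv n m w (\<lambda>j. \<phi> j s))"
        using sp fv_zero[OF n2] by simp
      show ?thesis using less.hyps[OF lt sch] eq by simp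
    next
      case False
      hence nz: "\<forall>s\<in>S. \<exists>j<m. \<phi> j s \<noteq> 0" by blast
      obtain \<mu>0 where \<mu>0: "\<exists>s\<in>S. \<mu>0 s \<noteq> 0" "\<forall>j<m. (\<Sum>s\<in>S. \<mu>0 s * \<phi> j s) = 0"
        using gauss[OF fS, of m \<phi>] cS by auto
      define F where "F = (\<lambda>s. fv n m w (\<lambda>j. \<phi> j s))"
      define \<mu> where "\<mu> = (if (\<Sum>s\<in>S. \<mu>0 s * F s) \<ge> 0 then \<mu>0 else (\<lambda>s. - \<mu>0 s))"
      have \<mu>1: "\<exists>s\<in>S. \<mu> s \<noteq> 0" using \<mu>0(1) by (auto simp: \<mu>_def)
      have \<mu>2: "\<forall>j<m. (\<Sum>s\<in>S. \<mu> s * \<phi> j s) = 0"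
        using \<mu>0(2) by (auto simp: \<mu>_def sum_negf)
      have \<mu>3: "(\<Sum>s\<in>S. \<mu> s * F s) \<ge> 0"
        by (auto simp: \<mu>_def sum_negf)
      define N where "N = {s\<in>S. \<mu> s < 0}"
      have Nne: "N \<noteq> {}"
      proof
        assume N0: "N = {}"
        hence pos: "\<forall>s\<in>S. 0 \<le> \<mu> s" by (force simp: N_def)
        obtain s1 where s1: "s1 \<in> S" "\<mu> s1 \<noteq> 0" using \<mu>1 by blast
        obtain j where j: "j < m" "\<phi> j s1 \<noteq> 0" using nz s1 by blast
        have "\<forall>s\<in>S. \<mu> s * \<phi> j s = 0"
          using \<mu>2 j pos nn fS by (subst sum_nonneg_eq_0_iff[symmetric]) auto
        thus False using s1 j by auto
      qed
      have fN: "finite N" using fS by (simp add: N_def)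
      have "Min (\<mu> ` N) \<in> \<mu> ` N" using fN Nne by (intro Min_in) auto
      then obtain s1 where s1: "s1 \<in> N" "\<mu> s1 = Min (\<mu> ` N)" by auto
      have s1min: "\<mu> s1 \<le> \<mu> s" if "s \<in> N" for s using s1 fN that by simp
      have s1S: "s1 \<in> S" and s1neg: "\<mu> s1 < 0" using s1 by (auto simp: N_def)
      define t where "t = - 1 / \<mu> s1"
      have tpos: "t > 0" using s1neg by (simp add: t_def)
      define l where "l = (\<lambda>s. 1 + t * \<mu> s)"
      have lnn: "l s \<ge> 0" if "s \<in> S" for s
      proof (cases "\<mu> s < 0")
        case True
        hence "\<mu> s1 \<le> \<mu> s" using s1min that by (simp add: N_def)
        hence "\<mu> s / \<mu> s1 \<le> 1" using s1neg True by (simp add: divide_le_eq)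
        thus ?thesis by (simp add: l_def t_def)
      next
        case False thus ?thesis using tpos by (simp add: l_def)
      qed
      have l0: "l s1 = 0" using s1neg by (simp add: l_def t_def)
      define S' where "S' = S - {s1}"
      define \<phi>' where "\<phi>' = (\<lambda>j s. l s * \<phi> j s)"
      have sp: "(\<Sum>s\<in>S. g s) = g s1 + (\<Sum>s\<in>S'. g s)" for g :: "nat \<Rightarrow> real"
        using fS s1S unfolding S'_def by (simp add: sum.remove)
      have sum': "(\<Sum>s\<in>S'. \<phi>' j s) = 1" if "j < m" for j
      proof -
        have "(\<Sum>s\<in>S'. \<phi>' j s) = (\<Sum>s\<in>S. \<phi>' j s)" using sp[of "\<phi>' j"] l0 by (simp add: \<phi>'_def)
        also have "\<dots> = (\<Sum>s\<in>S. \<phi> j s) + t * (\<Sum>s\<in>S. \<mu> s * \<phi> j s)"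
          by (simp add: \<phi>'_def l_def algebra_simps sum.distrib sum_distrib_left)
        finally show ?thesis using sum1 \<mu>2 that by simp
      qed
      have sch: "is_mixed_scheme m S' \<phi>'"
        by (rule scheme_intro) (use fS nn lnn sum' in \<open>auto simp: S'_def \<phi>'_def\<close>)
      have lt: "card S' < card S" using card_Diff1_less[OF fS s1S] unfolding S'_def .
      have "(\<Sum>s\<in>S'. fv n m w (\<lambda>j. \<phi>' j s)) = (\<Sum>s\<in>S'. l s * F s)"
        unfolding \<phi>'_def F_def using lnn by (intro sum.cong) (auto simp: S'_def fv_scale[OF n2])
      also have "\<dots> = (\<Sum>s\<in>S. l s * F s)" using sp[of "\<lambda>s. l s * F s"] l0 by simp
      also have "\<dots> = (\<Sum>s\<in>S. F s) + t * (\<Sum>s\<in>S. \<mu> s * F s)"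
        by (simp add: l_def algebra_simps sum.distrib sum_distrib_left)
      finally have "(\<Sum>s\<in>S. F s) \<le> (\<Sum>s\<in>S'. fv n m w (\<lambda>j. \<phi>' j s))"
        using tpos \<mu>3 by simp
      thus ?thesis using less.hyps[OF lt sch] unfolding F_def by force
    qed
  qed
qed



lemma closedin_le:
  assumes "continuous_map X euclideanreal h1" "continuous_map X euclideanreal h2"
  shows "closedin X {x \<in> topspace X. h1 x \<le> h2 x}"
proof -
  have "continuous_map X euclideanreal (\<lambda>x. h2 x - h1 x)" using assms by (intro continuous_map_diff)
  hence "closedin X {x \<in> topspace X. (\<lambda>x. h2 x - h1 x) x \<in> {0..}}"
    by (rule closedin_continuous_map_preimage) (simp add: closed_closedin[symmetric])
  moreover have "{x \<in> topspace X. (\<lambda>x. h2 x - h1 x) x \<in> {0..}} = {x \<in> topspace X. h1 x \<le> h2 x}" by auto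
  ultimately show ?thesis by simp
qed

lemma closedin_all:
  assumes "\<And>c. c \<in> C \<Longrightarrow> closedin X {x \<in> topspace X. P c x}"
  shows "closedin X {x \<in> topspace X. \<forall>c\<in>C. P c x}"
proof (cases "C = {}")
  case True thus ?thesis by simp
next
  case False
  have "{x \<in> topspace X. \<forall>c\<in>C. P c x} = \<Inter> ((\<lambda>c. {x \<in> topspace X. P c x}) ` C)"
    using False by auto
  moreover have "closedin X (\<Inter> ((\<lambda>c. {x \<in> topspace X. P c x}) ` C))"
    using False assms by (intro closedin_Inter) auto
  ultimately show ?thesis by simp
qed

lemma closedin_conj:
  assumes "closedin X {x \<in> topspace X. P x}" "closedin X {x \<in> topspace X. Q x}"
  shows "closedin X {x \<in> topspace X. P x \<and> Q x}"
proof -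
  have "{x \<in> topspace X. P x \<and> Q x} = {x \<in> topspace X. P x} \<inter> {x \<in> topspace X. Q x}" by auto
  thus ?thesis using assms by (simp add: closedin_Int)
qed

lemma cont_gl:
  assumes "\<And>j. j < m \<Longrightarrow> (c, j) \<in> I"
  shows "continuous_map (product_topology (\<lambda>_. euclideanreal) I) euclideanreal
           (\<lambda>Q. gl m w i (\<lambda>j. Q (c, j)))"
  unfolding gl_def
proof (intro continuous_map_sum)
  fix j assume "j \<in> {..<m}"
  hence cj: "(c, j) \<in> I" using assms by auto
  show "continuous_map (product_topology (\<lambda>_. euclideanreal) I) euclideanreal (\<lambda>Q. w i j * Q (c, j))"
    by (intro continuous_map_real_mult continuous_map_const[THEN iffD2] continuous_map_product_projection[OF cj, where X="\<lambda>_. euclideanreal", simplified]) auto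
qed auto



lemma exists_opt:
  assumes n2: "n \<ge> 2"
  shows "\<exists>S \<phi>. is_mixed_scheme m S \<phi> \<and> (\<forall>S' \<phi>'. is_mixed_scheme m S' \<phi>' \<longrightarrow>
     (\<Sum>s\<in>S'. fv n m w (\<lambda>j. \<phi>' j s)) \<le> (\<Sum>s\<in>S. fv n m w (\<lambda>j. \<phi> j s)))"
proof -
  define C where "C = cones n"
  define I where "I = C \<times> {..<m}"
  define X where "X = product_topology (\<lambda>_::(nat\<times>nat)\<times>nat. euclideanreal) I"
  define P0 where "P0 = (\<Pi>\<^sub>E i\<in>I. {0..1::real})"
  define K where "K = {Q \<in> P0. (\<forall>c\<in>C. incone n m w c (\<lambda>j. Q (c, j))) \<and> (\<forall>j<m. (\<Sum>c\<in>C. Q (c, j)) = 1)}"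
  define Obj where "Obj = (\<lambda>Q. \<Sum>c\<in>C. gl m w (snd c) (\<lambda>j. Q (c, j)))"
  have fC: "finite C" by (simp add: C_def finite_cones)
  have cg: "continuous_map X euclideanreal (\<lambda>Q. gl m w i (\<lambda>j. Q (c, j)))" if "c \<in> C" for c i
    unfolding X_def using that by (intro cont_gl) (auto simp: I_def)
  have cproj: "continuous_map X euclideanreal (\<lambda>Q. Q (c, j))" if "c \<in> C" "j < m" for c j
    unfolding X_def using that
    by (intro continuous_map_product_projection[where X="\<lambda>_. euclideanreal", simplified]) (auto simp: I_def)
  have cObj: "continuous_map X euclideanreal Obj"
    unfolding Obj_def using fC cg by (intro continuous_map_sum) auto
  have topX: "topspace X = (\<Pi>\<^sub>E i\<in>I. UNIV)" by (simp add: X_def)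
  have P0T: "P0 \<subseteq> topspace X" unfolding topX P0_def by (auto simp: PiE_iff)
  have cP0: "compactin X P0" unfolding X_def P0_def
    by (simp add: compactin_PiE)
  have K1: "closedin X {Q \<in> topspace X. \<forall>c\<in>C. incone n m w c (\<lambda>j. Q (c, j))}"
  proof (rule closedin_all)
    fix c assume c: "c \<in> C"
    have eq: "{Q \<in> topspace X. incone n m w c (\<lambda>j. Q (c, j))} =
      {Q \<in> topspace X. gl m w (snd c) (\<lambda>j. Q (c, j)) \<le> gl m w (fst c) (\<lambda>j. Q (c, j)) \<and>
        (\<forall>b\<in>{b. b < n \<and> b \<noteq> fst c}. gl m w b (\<lambda>j. Q (c, j)) \<le> gl m w (snd c) (\<lambda>j. Q (c, j)))}"
      unfolding incone_def by auto
    show "closedin X {Q \<in> topspace X. incone n m w c (\<lambda>j. Q (c, j))}"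
      unfolding eq using c cg by (intro closedin_conj closedin_le closedin_all) auto
  qed
  have K2: "closedin X {Q \<in> topspace X. \<forall>j\<in>{..<m}. (\<Sum>c\<in>C. Q (c, j)) \<le> 1 \<and> 1 \<le> (\<Sum>c\<in>C. Q (c, j))}"
  proof (rule closedin_all)
    fix j assume j: "j \<in> {..<m}"
    have cs: "continuous_map X euclideanreal (\<lambda>Q. \<Sum>c\<in>C. Q (c, j))"
      using fC cproj j by (intro continuous_map_sum) auto
    show "closedin X {Q \<in> topspace X. (\<Sum>c\<in>C. Q (c, j)) \<le> 1 \<and> 1 \<le> (\<Sum>c\<in>C. Q (c, j))}"
      using cs by (intro closedin_conj closedin_le) auto
  qed
  have Keq: "K = P0 \<inter> ({Q \<in> topspace X. \<forall>c\<in>C. incone n m w c (\<lambda>j. Q (c, j))} \<inter>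
      {Q \<in> topspace X. \<forall>j\<in>{..<m}. (\<Sum>c\<in>C. Q (c, j)) \<le> 1 \<and> 1 \<le> (\<Sum>c\<in>C. Q (c, j))})"
    unfolding K_def using P0T by (auto simp: order_antisym)
  have cK: "compactin X K"
  proof (rule closed_compactin[OF cP0])
    show "K \<subseteq> P0" unfolding K_def by auto
    have "P0 = {Q \<in> topspace X. \<forall>i\<in>I. (\<lambda>_. 0) Q \<le> Q i \<and> Q i \<le> (\<lambda>_. 1) Q}"
      unfolding P0_def topX by (auto simp: PiE_iff extensional_def)
    moreover have "closedin X {Q \<in> topspace X. \<forall>i\<in>I. (\<lambda>_. 0) Q \<le> Q i \<and> Q i \<le> (\<lambda>_. 1) Q}"
    proof (rule closedin_all)
      fix i assume i: "i \<in> I"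
      then obtain c j where "i = (c, j)" "c \<in> C" "j < m" by (auto simp: I_def)
      hence ci: "continuous_map X euclideanreal (\<lambda>Q. Q i)" using cproj by simp
      show "closedin X {Q \<in> topspace X. (\<lambda>_. 0) Q \<le> Q i \<and> Q i \<le> (\<lambda>_. 1) Q}"
        by (intro closedin_conj closedin_le ci) auto
    qed
    ultimately have "closedin X P0" by simp
    thus "closedin X K" unfolding Keq using K1 K2 by (intro closedin_Int)
  qed
  obtain c0 where c0: "c0 \<in> C" "incone n m w c0 (\<lambda>_. 1)" using cone_exists[OF n2] unfolding C_def by blast
  define Q0 where "Q0 = restrict (\<lambda>cj. if fst cj = c0 then 1 else 0::real) I"
  have "Q0 \<in> K"
  proof -
    have "Q0 \<in> P0" unfolding Q0_def P0_def by (auto simp: PiE_iff)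
    moreover have "incone n m w c (\<lambda>j. Q0 (c, j))" if "c \<in> C" for c
    proof (cases "c = c0")
      case True
      have "incone n m w c (\<lambda>j. Q0 (c, j)) = incone n m w c (\<lambda>_. 1)"
        using that True by (intro incone_cong) (auto simp: Q0_def I_def)
      thus ?thesis using c0 True by simp
    next
      case False
      have "incone n m w c (\<lambda>j. Q0 (c, j)) = incone n m w c (\<lambda>_. 0)"
        using that False by (intro incone_cong) (auto simp: Q0_def I_def)
      thus ?thesis using incone_zero by simp
    qed
    moreover have "(\<Sum>c\<in>C. Q0 (c, j)) = 1" if "j < m" for j
    proof -
      have "(\<Sum>c\<in>C. Q0 (c, j)) = (\<Sum>c\<in>C. if c = c0 then 1 else 0)"
        using that by (intro sum.cong) (auto simp: Q0_def I_def)
      thus ?thesis using fC c0 by simp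
    qed
    ultimately show ?thesis unfolding K_def by auto
  qed
  hence Kne: "K \<noteq> {}" by auto
  have "compactin euclideanreal (Obj ` K)" by (rule image_compactin[OF cK cObj])
  hence "compact (Obj ` K)" by simp
  then obtain Qs where Qs: "Qs \<in> K" "\<And>Q. Q \<in> K \<Longrightarrow> Obj Q \<le> Obj Qs"
    using compact_attains_sup[of "Obj ` K"] Kne by auto
  have dom: "(\<Sum>s\<in>S'. fv n m w (\<lambda>j. \<phi>' j s)) \<le> Obj Qs" if sch: "is_mixed_scheme m S' \<phi>'" for S' \<phi>'
  proof -
    have fS: "finite S'" and nn: "\<And>j s. j < m \<Longrightarrow> s \<in> S' \<Longrightarrow> 0 \<le> \<phi>' j s"
      and sum1: "\<And>j. j < m \<Longrightarrow> (\<Sum>s\<in>S'. \<phi>' j s) = 1"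
      using sch unfolding is_mixed_scheme_def by auto
    define cs where "cs = (\<lambda>s. SOME c. c \<in> C \<and> incone n m w c (\<lambda>j. \<phi>' j s))"
    have cs: "cs s \<in> C \<and> incone n m w (cs s) (\<lambda>j. \<phi>' j s)" for s
    proof -
      have "\<exists>c. c \<in> C \<and> incone n m w c (\<lambda>j. \<phi>' j s)"
        using cone_exists[OF n2, of m w "\<lambda>j. \<phi>' j s"] unfolding C_def by blast
      thus ?thesis unfolding cs_def by (rule someI_ex)
    qed
    define T where "T = (\<lambda>c. {s \<in> S'. cs s = c})"
    define Q where "Q = restrict (\<lambda>cj. \<Sum>s\<in>T (fst cj). \<phi>' (snd cj) s) I"
    have Qc: "Q (c, j) = (\<Sum>s\<in>T c. \<phi>' j s)" if "c \<in> C" "j < m" for c j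
      using that by (simp add: Q_def I_def)
    have grp: "(\<Sum>c\<in>C. \<Sum>s\<in>T c. g s) = (\<Sum>s\<in>S'. g s)" for g :: "nat \<Rightarrow> real"
      unfolding T_def using sum.group[OF fS fC, of cs g] cs by auto
    have "Q \<in> K"
    proof -
      have "Q \<in> P0"
      proof -
        have "0 \<le> (\<Sum>s\<in>T c. \<phi>' j s) \<and> (\<Sum>s\<in>T c. \<phi>' j s) \<le> 1" if "c \<in> C" "j < m" for c j
        proof
          show "0 \<le> (\<Sum>s\<in>T c. \<phi>' j s)" using nn that by (intro sum_nonneg) (auto simp: T_def)
          have "(\<Sum>s\<in>T c. \<phi>' j s) \<le> (\<Sum>s\<in>S'. \<phi>' j s)"
            using nn that fS by (intro sum_mono2) (auto simp: T_def)
          thus "(\<Sum>s\<in>T c. \<phi>' j s) \<le> 1" using sum1 that by simp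
        qed
        thus ?thesis unfolding P0_def Q_def I_def by (auto simp: PiE_iff)
      qed
      moreover have "incone n m w c (\<lambda>j. Q (c, j))" if c: "c \<in> C" for c
      proof -
        have "incone n m w c (\<lambda>j. Q (c, j)) = incone n m w c (\<lambda>j. \<Sum>s\<in>T c. \<phi>' j s)"
          using c by (intro incone_cong) (simp add: Qc)
        moreover have "incone n m w c (\<lambda>j. \<Sum>s\<in>T c. \<phi>' j s)"
          using cs by (intro incone_sum) (auto simp: T_def)
        ultimately show ?thesis by simp
      qed
      moreover have "(\<Sum>c\<in>C. Q (c, j)) = 1" if "j < m" for j
        using that grp[of "\<phi>' j"] sum1 by (simp add: Qc)
      ultimately show ?thesis unfolding K_def by auto
    qed
    have "(\<Sum>s\<in>S'. fv n m w (\<lambda>j. \<phi>' j s)) = (\<Sum>s\<in>S'. gl m w (snd (cs s)) (\<lambda>j. \<phi>' j s))"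
      using cs fv_cone[OF n2] by (intro sum.cong) (auto simp: C_def)
    also have "\<dots> = (\<Sum>c\<in>C. \<Sum>s\<in>T c. gl m w (snd (cs s)) (\<lambda>j. \<phi>' j s))"
      by (rule grp[symmetric])
    also have "\<dots> = (\<Sum>c\<in>C. \<Sum>s\<in>T c. gl m w (snd c) (\<lambda>j. \<phi>' j s))"
      by (intro sum.cong) (auto simp: T_def)
    also have "\<dots> = (\<Sum>c\<in>C. gl m w (snd c) (\<lambda>j. \<Sum>s\<in>T c. \<phi>' j s))"
      by (simp add: gl_sum)
    also have "\<dots> = Obj Q"
      unfolding Obj_def by (intro sum.cong refl gl_cong) (simp add: Qc)
    also have "\<dots> \<le> Obj Qs" using Qs(2) \<open>Q \<in> K\<close> by simp
    finally show ?thesis .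
  qed
  define enc where "enc = (\<lambda>c::nat\<times>nat. fst c * n + snd c)"
  have dec: "(enc c div n, enc c mod n) = c" if "c \<in> C" for c
    using that n2 by (cases c) (auto simp: enc_def C_def cones_def)
  have inj: "inj_on enc C" by (metis dec inj_onI)
  define Ss where "Ss = enc ` C"
  define \<phi>s where "\<phi>s = (\<lambda>j s. Qs ((s div n, s mod n), j))"
  have reidx: "(\<Sum>s\<in>Ss. g s) = (\<Sum>c\<in>C. g (enc c))" for g :: "nat \<Rightarrow> real"
    unfolding Ss_def by (rule sum.reindex[OF inj, unfolded comp_def])
  have \<phi>s_enc: "\<phi>s j (enc c) = Qs (c, j)" if "c \<in> C" for c j
    using dec[OF that] by (simp add: \<phi>s_def)
  have QsK: "Qs \<in> P0" "\<forall>c\<in>C. incone n m w c (\<lambda>j. Qs (c, j))" "\<forall>j<m. (\<Sum>c\<in>C. Qs (c, j)) = 1"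
    using Qs(1) unfolding K_def by auto
  have schS: "is_mixed_scheme m Ss \<phi>s"
  proof (rule scheme_intro)
    show "finite Ss" using fC by (simp add: Ss_def)
    show "0 \<le> \<phi>s j s" if jm: "j < m" and sS: "s \<in> Ss" for j s
    proof -
      obtain c where c: "c \<in> C" "s = enc c" using sS unfolding Ss_def by blast
      have "(c, j) \<in> I" using c jm by (simp add: I_def)
      hence "Qs (c, j) \<in> {0..1}" using QsK(1) unfolding P0_def by (auto simp: PiE_iff)
      thus ?thesis using \<phi>s_enc c by simp
    qed
    show "(\<Sum>s\<in>Ss. \<phi>s j s) = 1" if "j < m" for j
      using QsK(3) that by (simp add: reidx \<phi>s_enc)
  qed
  have "(\<Sum>s\<in>Ss. fv n m w (\<lambda>j. \<phi>s j s)) = (\<Sum>c\<in>C. fv n m w (\<lambda>j. Qs (c, j)))"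
    by (simp add: reidx \<phi>s_enc)
  also have "\<dots> = Obj Qs"
    unfolding Obj_def using QsK(2) fv_cone[OF n2] by (intro sum.cong) (auto simp: C_def)
  finally have "Obj Qs = (\<Sum>s\<in>Ss. fv n m w (\<lambda>j. \<phi>s j s))" by simp
  thus ?thesis using schS dom by metis
qed


theorem mainTheorem2:
  fixes n m :: nat and p :: "nat \<Rightarrow> real" and v :: "nat \<Rightarrow> nat \<Rightarrow> real"
  assumes "n \<ge> 2"
    and "\<forall>j<m. 0 \<le> p j"
    and "(\<Sum>j<m. p j) = 1"
    and "\<forall>i<n. \<forall>j<m. 0 \<le> v i j"
  shows "\<exists>S \<phi>. is_mixed_scheme m S \<phi> \<and>
           card S \<le> m + min (n choose 2) (m choose 2) \<and>
           (\<forall>S' \<phi>'. is_mixed_scheme m S' \<phi>' \<longrightarrow>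
                revenue n m p v S' \<phi>' \<le> revenue n m p v S \<phi>)"
proof -
  have n2: "n \<ge> 2" by fact
  define w where "w = (\<lambda>i j. p j * v i j)"
  have rev: "revenue n m p v S \<phi> = (\<Sum>s\<in>S. fv n m w (\<lambda>j. \<phi> j s))" for S \<phi>
    unfolding revenue_def fv_def gl_def w_def by simp
  obtain S \<phi> where S: "is_mixed_scheme m S \<phi>"
    "\<forall>S' \<phi>'. is_mixed_scheme m S' \<phi>' \<longrightarrow>
       (\<Sum>s\<in>S'. fv n m w (\<lambda>j. \<phi>' j s)) \<le> (\<Sum>s\<in>S. fv n m w (\<lambda>j. \<phi> j s))"
    using exists_opt[OF n2, of m w] by blast
  obtain S2 \<phi>2 where S2: "is_mixed_scheme m S2 \<phi>2" "card S2 \<le> m"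
    "(\<Sum>s\<in>S. fv n m w (\<lambda>j. \<phi> j s)) \<le> (\<Sum>s\<in>S2. fv n m w (\<lambda>j. \<phi>2 j s))"
    using reduce[OF n2 S(1), of w] by blast
  have "\<forall>S' \<phi>'. is_mixed_scheme m S' \<phi>' \<longrightarrow> revenue n m p v S' \<phi>' \<le> revenue n m p v S2 \<phi>2"
    unfolding rev using S(2) S2(3) by (meson order_trans)
  moreover have "card S2 \<le> m + min (n choose 2) (m choose 2)" using S2(2) by simp
  ultimately show ?thesis using S2(1) by blast
qed

end
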